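(* For $D\in\mathbb N$ let $H_D:=\{\sum_{n=-D}^Da_ne_n:\ a_n\in\mathbb C\}$. Let $\gamma,\omega\in\mathbb R$, $\beta\in\mathbb C$. Then every $H_D$ is invariant for both equations $$\partial_t\widehat w=(1+i\gamma)\partial_x^2\widehat w+\beta\widehat w-(1+i\omega)N(\widehat w)\quad\text{and}\quad\partial_t\widehat w=\partial_x^2\widehat w+\beta\widehat w-(1+i\omega)M(\widehat w),$$ and their global attractors satisfy $\widehat{\mathcal A}_{GL1}\subset H_D$, $\widehat{\mathcal A}_{GL2}\subset H_D$ provided $D=D(\beta,\omega)$ is large enough. In particular, for the second equation one may take $D=[\sqrt{\operatorname{Re}\beta}]+1$ (where $[z]$ is the integer part), and its global attractor is trivial if $\operatorname{Re}\beta<0$.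
   Context: $e_n=e^{inx}$, $w=\sum_nw_ne_n$; $H=L^2_{per}(-\pi,\pi)$ complex-valued, $\|w\|_H^2=\sum|w_n|^2$; $[w,v]=\sum_nw_nv_{-n}$. $N(w)=\big(2w_0(\|w\|^2_H-|w_0|^2)+\bar w_0[w,w]\big)e_0+\sum_{n\ne0}\big(w_n(2\|w\|^2_H-|w_n|^2-2|w_{-n}|^2)+\bar w_{-n}[w,w]\big)e_n$, $M(w)=\sum_nw_n(2\|w\|_H^2-|w_n|^2)e_n$. $\widehat{\mathcal A}_{GL1}$, $\widehat{\mathcal A}_{GL2}$ denote the global attractors in $H$ of the first and second equation respectively. *)

theory Defs
  imports "HOL-Analysis.Analysis"
begin

text \<open>Elements of H = L^2_per(-pi,pi) are represented by their Fourier
coefficient sequences w :: int \<Rightarrow> complex (w n is the coefficient of e_n).\<close>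

type_synonym fseq = "int \<Rightarrow> complex"

definition inH :: "fseq \<Rightarrow> bool" where
  "inH w \<longleftrightarrow> (\<lambda>n. (norm (w n))\<^sup>2) summable_on UNIV"

definition Hnorm2 :: "fseq \<Rightarrow> real" where
  "Hnorm2 w = (\<Sum>\<^sub>\<infinity>n. (norm (w n))\<^sup>2)"

definition Hdist :: "fseq \<Rightarrow> fseq \<Rightarrow> real" where
  "Hdist w v = sqrt (Hnorm2 (\<lambda>n. w n - v n))"

definition bracket :: "fseq \<Rightarrow> fseq \<Rightarrow> complex" where
  "bracket w v = (\<Sum>\<^sub>\<infinity>n. w n * v (- n))"

definition Nop :: "fseq \<Rightarrow> fseq" where
  "Nop w n =
     (if n = 0 then
        2 * w 0 * complex_of_real (Hnorm2 w - (norm (w 0))\<^sup>2) + cnj (w 0) * bracket w w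
      else
        w n * complex_of_real (2 * Hnorm2 w - (norm (w n))\<^sup>2 - 2 * (norm (w (- n)))\<^sup>2)
        + cnj (w (- n)) * bracket w w)"

definition Mop :: "fseq \<Rightarrow> fseq" where
  "Mop w n = w n * complex_of_real (2 * Hnorm2 w - (norm (w n))\<^sup>2)"

text \<open>Fourier form of the right-hand sides (\<partial>_x^2 e_n = -n^2 e_n).\<close>

definition rhs_GL1 :: "real \<Rightarrow> complex \<Rightarrow> real \<Rightarrow> fseq \<Rightarrow> fseq" where
  "rhs_GL1 \<gamma> \<beta> \<omega> w n =
     - (1 + \<i> * complex_of_real \<gamma>) * of_int (n\<^sup>2) * w n + \<beta> * w n
     - (1 + \<i> * complex_of_real \<omega>) * Nop w n"

definition rhs_GL2 :: "complex \<Rightarrow> real \<Rightarrow> fseq \<Rightarrow> fseq" where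
  "rhs_GL2 \<beta> \<omega> w n =
     - of_int (n\<^sup>2) * w n + \<beta> * w n - (1 + \<i> * complex_of_real \<omega>) * Mop w n"

definition is_solution :: "(fseq \<Rightarrow> fseq) \<Rightarrow> (real \<Rightarrow> fseq) \<Rightarrow> bool" where
  "is_solution (F::fseq \<Rightarrow> fseq) (u::real \<Rightarrow> fseq) \<longleftrightarrow>
     (\<forall>t\<ge>0. inH (u t)) \<and>
     (\<forall>t\<ge>0. ((\<lambda>s. Hdist (u s) (u t)) \<longlongrightarrow> 0) (at t within {0..})) \<and>
     (\<forall>t>0. \<forall>n. ((\<lambda>s::real. (u s n :: complex)) has_vector_derivative F (u t) n) (at t))"

definition H_D :: "nat \<Rightarrow> fseq set" where
  "H_D D = {w. inH w \<and> (\<forall>n. \<bar>n\<bar> > int D \<longrightarrow> w n = 0)}"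

definition Hbounded :: "fseq set \<Rightarrow> bool" where
  "Hbounded B \<longleftrightarrow> B \<subseteq> {w. inH w} \<and> (\<exists>R. \<forall>w\<in>B. Hnorm2 w \<le> R)"

definition Hcompact :: "fseq set \<Rightarrow> bool" where
  "Hcompact A \<longleftrightarrow> A \<subseteq> {w. inH w} \<and>
     (\<forall>x::nat \<Rightarrow> fseq. (\<forall>k. x k \<in> A) \<longrightarrow>
        (\<exists>(r::nat \<Rightarrow> nat) a. strict_mono r \<and> a \<in> A \<and> (\<lambda>k. Hdist (x (r k)) a) \<longlonglongrightarrow> 0))"

definition is_global_attractor :: "(fseq \<Rightarrow> fseq) \<Rightarrow> fseq set \<Rightarrow> bool" where
  "is_global_attractor F A \<longleftrightarrow>
     Hcompact A \<and>
     (\<forall>t\<ge>0. A = {u t | u. is_solution F u \<and> u 0 \<in> A}) \<and>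
     (\<forall>B. Hbounded B \<longrightarrow> (\<forall>\<epsilon>>0. \<exists>T. \<forall>t\<ge>T. \<forall>u.
        is_solution F u \<and> u 0 \<in> B \<longrightarrow> (\<exists>a\<in>A. Hdist (u t) a < \<epsilon>)))"

end

theory Submission
  imports Defs
begin


abbreviation X :: "fseq \<Rightarrow> int \<Rightarrow> real" where "X w n \<equiv> (cmod (w n))\<^sup>2"

lemma inH_cmp:
  assumes "inH w" "\<And>n. (cmod (v n))\<^sup>2 \<le> c * (cmod (w n))\<^sup>2"
  shows "inH v"
  unfolding inH_def
  by (rule summable_on_comparison_test[of "\<lambda>n. c * (cmod (w n))\<^sup>2"])
     (use assms in \<open>auto simp: inH_def intro: summable_on_cmult_right\<close>)

lemma inH_diff:
  assumes "inH w" "inH v" shows "inH (\<lambda>n. w n - v n)"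
proof -
  have s: "(\<lambda>n. 2 * X w n + 2 * X v n) summable_on UNIV"
    using assms unfolding inH_def by (intro summable_on_add summable_on_cmult_right)
  have "(cmod (w n - v n))\<^sup>2 \<le> 2 * X w n + 2 * X v n" for n
  proof -
    have "cmod (w n - v n) \<le> cmod (w n) + cmod (v n)" by (rule norm_triangle_ineq4)
    hence "(cmod (w n - v n))\<^sup>2 \<le> (cmod (w n) + cmod (v n))\<^sup>2"
      by (simp add: power_mono)
    also have "\<dots> \<le> 2 * X w n + 2 * X v n" by (smt (verit) power2_sum sum_squares_bound)
    finally show ?thesis .
  qed
  thus ?thesis unfolding inH_def
    by (intro summable_on_comparison_test[OF s]) auto
qed

lemma inH_zero: "inH (\<lambda>n. 0)" unfolding inH_def by simp

lemma Hnorm2_nonneg: "Hnorm2 w \<ge> 0"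
  unfolding Hnorm2_def by (rule infsum_nonneg) simp

lemma Hnorm2_zero: "Hnorm2 (\<lambda>n. 0) = 0"
  unfolding Hnorm2_def by simp

lemma sum_le_Hnorm2:
  assumes "inH w" "finite F" shows "sum (X w) F \<le> Hnorm2 w"
proof -
  have "sum (X w) F = infsum (X w) F" using assms(2) by simp
  also have "\<dots> \<le> infsum (X w) UNIV"
    using assms unfolding inH_def by (intro infsum_mono2) auto
  finally show ?thesis unfolding Hnorm2_def .
qed

lemma coeff_le_Hnorm2:
  assumes "inH w" shows "X w n \<le> Hnorm2 w"
  using sum_le_Hnorm2[OF assms, of "{n}"] by simp

lemma pair_le_Hnorm2:
  assumes "inH w" "n \<noteq> 0" shows "X w n + X w (-n) \<le> Hnorm2 w"
  using sum_le_Hnorm2[OF assms(1), of "{n,-n}"] assms(2) by simp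

lemma Hnorm2_le_finite:
  assumes "inH w" "\<And>F. finite F \<Longrightarrow> sum (X w) F \<le> c" shows "Hnorm2 w \<le> c"
  unfolding Hnorm2_def using assms unfolding inH_def
  by (intro infsum_le_finite_sums) auto

lemma minkowski_set:
  assumes "inH w" "inH v"
  shows "sqrt (infsum (X w) B) \<le> sqrt (infsum (X v) B) + sqrt (infsum (\<lambda>n. (cmod (w n - v n))\<^sup>2) B)"
proof -
  let ?a = "sqrt (infsum (X v) B)" and ?d = "sqrt (infsum (\<lambda>n. (cmod (w n - v n))\<^sup>2) B)"
  have sw: "X w summable_on B" using assms(1) unfolding inH_def by (rule summable_on_subset_banach) auto
  have sv: "X v summable_on B" using assms(2) unfolding inH_def by (rule summable_on_subset_banach) auto
  have sd: "(\<lambda>n. (cmod (w n - v n))\<^sup>2) summable_on B" using inH_diff[OF assms] unfolding inH_def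
    by (rule summable_on_subset_banach) auto
  have "infsum (X w) B \<le> (?a + ?d)\<^sup>2"
  proof (rule infsum_le_finite_sums[OF sw])
    fix F assume F: "finite F" "F \<subseteq> B"
    have "L2_set (\<lambda>n. cmod (w n)) F \<le> L2_set (\<lambda>n. cmod (v n) + cmod (w n - v n)) F"
      by (rule L2_set_mono) (auto simp: norm_triangle_sub)
    also have "\<dots> \<le> L2_set (\<lambda>n. cmod (v n)) F + L2_set (\<lambda>n. cmod (w n - v n)) F"
      by (rule L2_set_triangle_ineq)
    also have "L2_set (\<lambda>n. cmod (v n)) F \<le> ?a"
    proof -
      have "sum (X v) F = infsum (X v) F" using F by simp
      also have "\<dots> \<le> infsum (X v) B" using F sv by (intro infsum_mono2) auto
      finally show ?thesis unfolding L2_set_def by (rule real_sqrt_le_mono)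
    qed
    also have "L2_set (\<lambda>n. cmod (w n - v n)) F \<le> ?d"
    proof -
      have "sum (\<lambda>n. (cmod (w n - v n))\<^sup>2) F = infsum (\<lambda>n. (cmod (w n - v n))\<^sup>2) F" using F by simp
      also have "\<dots> \<le> infsum (\<lambda>n. (cmod (w n - v n))\<^sup>2) B" using F sd by (intro infsum_mono2) auto
      finally show ?thesis unfolding L2_set_def by (rule real_sqrt_le_mono)
    qed
    finally have "sqrt (sum (X w) F) \<le> ?a + ?d" unfolding L2_set_def by simp
    thus "sum (X w) F \<le> (?a + ?d)\<^sup>2" by (rule sqrt_le_D)
  qed
  moreover have "?a + ?d \<ge> 0" by (intro add_nonneg_nonneg real_sqrt_ge_zero infsum_nonneg) auto
  ultimately show ?thesis by (intro real_le_lsqrt) auto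
qed

lemma minkowski:
  assumes "inH w" "inH v"
  shows "sqrt (Hnorm2 w) \<le> sqrt (Hnorm2 v) + Hdist w v"
  using minkowski_set[OF assms, of UNIV] unfolding Hnorm2_def Hdist_def by simp

lemma coeff_diff_le:
  assumes "inH w" "inH v" shows "cmod (w n - v n) \<le> Hdist w v"
proof -
  have "(cmod (w n - v n))\<^sup>2 \<le> Hnorm2 (\<lambda>n. w n - v n)"
    using coeff_le_Hnorm2[OF inH_diff[OF assms]] by simp
  thus ?thesis unfolding Hdist_def by (simp add: real_le_rsqrt)
qed



lemma deriv_X:
  assumes "is_solution F u" "t > 0"
  shows "((\<lambda>s. X (u s) n) has_real_derivative 2 * Re (cnj (u t n) * F (u t) n)) (at t)"
proof -
  have d: "((\<lambda>s. u s n) has_vector_derivative F (u t) n) (at t)"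
    using assms unfolding is_solution_def by auto
  have dr: "((\<lambda>s. Re (u s n)) has_real_derivative Re (F (u t) n)) (at t)"
    using has_field_derivative_Re[OF d] .
  have di: "((\<lambda>s. Im (u s n)) has_real_derivative Im (F (u t) n)) (at t)"
    using has_field_derivative_Im[OF d] .
  have eq: "(\<lambda>s. X (u s) n) = (\<lambda>s. (Re (u s n))\<^sup>2 + (Im (u s n))\<^sup>2)"
    by (simp add: cmod_power2)
  have "((\<lambda>s. (Re (u s n))\<^sup>2 + (Im (u s n))\<^sup>2) has_real_derivative
         2 * Re (u t n) * Re (F (u t) n) + 2 * Im (u t n) * Im (F (u t) n)) (at t)"
    by (rule derivative_eq_intros dr di refl | simp)+
  moreover have "2 * Re (u t n) * Re (F (u t) n) + 2 * Im (u t n) * Im (F (u t) n)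
        = 2 * Re (cnj (u t n) * F (u t) n)" by (simp add: algebra_simps)
  ultimately show ?thesis unfolding eq by simp
qed

lemma sol_inH: "is_solution F u \<Longrightarrow> t \<ge> 0 \<Longrightarrow> inH (u t)"
  unfolding is_solution_def by auto

lemma cont_coeff:
  assumes "is_solution F u"
  shows "continuous_on {0..} (\<lambda>s. u s n)"
  unfolding continuous_on_def
proof (intro ballI)
  fix t :: real assume t: "t \<in> {0..}"
  have lim: "((\<lambda>s. Hdist (u s) (u t)) \<longlongrightarrow> 0) (at t within {0..})"
    using assms t unfolding is_solution_def by auto
  have ev: "eventually (\<lambda>s. norm (u s n - u t n) \<le> Hdist (u s) (u t)) (at t within {0..})"
    unfolding eventually_at_filter
    using t by (intro always_eventually allI impI coeff_diff_le sol_inH[OF assms]) auto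
  show "((\<lambda>s. u s n) \<longlongrightarrow> u t n) (at t within {0..})"
    unfolding Lim_null[of _ "u t n"] by (rule Lim_null_comparison[OF ev lim])
qed

lemma cont_X:
  assumes "is_solution F u"
  shows "continuous_on {0..} (\<lambda>s. X (u s) n)"
  using cont_coeff[OF assms] by (intro continuous_intros)

lemma growth:
  fixes f f' :: "real \<Rightarrow> real"
  assumes "t0 \<le> t1" "continuous_on {t0..t1} f"
    "\<And>s. t0 < s \<Longrightarrow> s < t1 \<Longrightarrow> (f has_real_derivative f' s) (at s)"
    "\<And>s. t0 < s \<Longrightarrow> s < t1 \<Longrightarrow> f' s \<le> c * f s"
  shows "f t1 \<le> exp (c * (t1 - t0)) * f t0"
proof -
  define g where "g s = exp (- c * (s - t0)) * f s" for s
  have "g t1 \<le> g t0"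
  proof (rule DERIV_nonpos_imp_decreasing_open[OF assms(1)])
    fix s assume s: "t0 < s" "s < t1"
    have "(g has_real_derivative exp (- c * (s - t0)) * f' s + (- c) * exp (- c * (s - t0)) * f s) (at s)"
      unfolding g_def
      by (rule derivative_eq_intros assms(3)[OF s] refl | simp)+
    moreover have "exp (- c * (s - t0)) * f' s + (- c) * exp (- c * (s - t0)) * f s
        = exp (- c * (s - t0)) * (f' s - c * f s)" by (simp add: algebra_simps)
    moreover have "exp (- c * (s - t0)) * (f' s - c * f s) \<le> 0"
      using assms(4)[OF s] by (simp add: mult_nonneg_nonpos)
    ultimately show "\<exists>y. (g has_real_derivative y) (at s) \<and> y \<le> 0" by auto
  next
    show "continuous_on {t0..t1} g" unfolding g_def using assms(2) by (intro continuous_intros)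
  qed
  hence "exp (- c * (t1 - t0)) * f t1 \<le> f t0" unfolding g_def by simp
  hence h: "exp (- (c * (t1 - t0))) * f t1 \<le> f t0" by simp
  have "f t1 = exp (c * (t1 - t0)) * (exp (- (c * (t1 - t0))) * f t1)"
    by (simp add: exp_minus_inverse mult.assoc[symmetric])
  also have "\<dots> \<le> exp (c * (t1 - t0)) * f t0" using h by (intro mult_left_mono) auto
  finally show ?thesis .
qed

lemma barrier:
  fixes f f' :: "real \<Rightarrow> real"
  assumes cont: "continuous_on {0..} f"
    and der: "\<And>s. 0 < s \<Longrightarrow> (f has_real_derivative f' s) (at s)"
    and neg: "\<And>s. 0 < s \<Longrightarrow> f s \<ge> L \<Longrightarrow> f' s \<le> -1"
    and t: "t \<ge> 0"
  shows "f t \<le> max L (f 0 - t)"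
proof (rule ccontr)
  assume c: "\<not> ?thesis"
  hence ft: "f t > L" "f t > f 0 - t" by auto
  have dec: "f b + b \<le> f a + a" if ab: "0 \<le> a" "a \<le> b" "b \<le> t" and gt: "\<And>s. a < s \<Longrightarrow> s < b \<Longrightarrow> f s > L" for a b
  proof -
    have "(\<lambda>s. f s + s) b \<le> (\<lambda>s. f s + s) a"
    proof (rule DERIV_nonpos_imp_decreasing_open[OF ab(2)])
      fix s assume s: "a < s" "s < b"
      have "((\<lambda>s. f s + s) has_real_derivative f' s + 1) (at s)"
      proof -
        have "0 < s" using s ab by auto
        from der[OF this] show ?thesis by (intro derivative_eq_intros) auto
      qed
      moreover have "f' s + 1 \<le> 0" using neg[of s] gt[OF s] s ab by auto
      ultimately show "\<exists>y. ((\<lambda>s. f s + s) has_real_derivative y) (at s) \<and> y \<le> 0" by auto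
    next
      show "continuous_on {a..b} (\<lambda>s. f s + s)"
        using ab by (intro continuous_intros continuous_on_subset[OF cont]) auto
    qed
    thus ?thesis by simp
  qed
  define Z where "Z = {s \<in> {0..t}. f s \<le> L}"
  show False
  proof (cases "Z = {}")
    case True
    have "f t + t \<le> f 0 + 0"
    proof (rule dec)
      show "f s > L" if "0 < s" "s < t" for s
      proof -
        have "s \<notin> Z" using True by simp
        thus ?thesis using that by (auto simp: Z_def)
      qed
    qed (use t in auto)
    thus False using ft by simp
  next
    case False
    have cl: "closed Z" unfolding Z_def
      by (intro continuous_on_closed_Collect_le continuous_on_subset[OF cont] continuous_intros) auto
    have bd: "bounded Z" unfolding Z_def by (rule bounded_subset[of "{0..t}"]) auto
    have cZ: "compact Z" using cl bd by (simp add: compact_eq_bounded_closed)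
    define s0 where "s0 = Sup Z"
    have s0Z: "s0 \<in> Z" unfolding s0_def using False bd cl by (intro closed_contains_Sup bounded_imp_bdd_above)
    have s0le: "\<And>z. z \<in> Z \<Longrightarrow> z \<le> s0" unfolding s0_def
      using bd False by (meson bounded_imp_bdd_above cSup_upper)
    have "f t + t \<le> f s0 + s0"
    proof (rule dec)
      show "0 \<le> s0" "s0 \<le> t" using s0Z by (auto simp: Z_def)
      show "f s > L" if "s0 < s" "s < t" for s
        using s0le[of s] that s0Z by (force simp: Z_def)
    qed simp
    moreover have "f s0 \<le> L" "s0 \<le> t" using s0Z by (auto simp: Z_def)
    ultimately show False using ft by simp
  qed
qed



lemma re_bound: "\<bar>Re ((1 + \<i> * complex_of_real \<omega>) * z)\<bar> \<le> (1 + \<bar>\<omega>\<bar>) * cmod z"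
proof -
  have "Re ((1 + \<i> * complex_of_real \<omega>) * z) = Re z - \<omega> * Im z" by simp
  also have "\<bar>\<dots>\<bar> \<le> \<bar>Re z\<bar> + \<bar>\<omega>\<bar> * \<bar>Im z\<bar>"
    using abs_triangle_ineq4[of "Re z" "\<omega> * Im z"] by (simp add: abs_mult)
  also have "\<dots> \<le> cmod z + \<bar>\<omega>\<bar> * cmod z"
    by (intro add_mono mult_left_mono abs_Re_le_cmod abs_Im_le_cmod) auto
  finally show ?thesis by (simp add: algebra_simps)
qed

lemma cnj_mult_self: "cnj z * z = complex_of_real ((cmod z)\<^sup>2)"
  by (metis complex_norm_square mult.commute)

lemma re_ofreal_mult: "Re (complex_of_real r * a) = r * Re a" by simp

lemma re_cnj_mult: "Re (cnj z * (z * a)) = (cmod z)\<^sup>2 * Re a"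
proof -
  have "cnj z * (z * a) = (cnj z * z) * a" by (simp only: mult.assoc)
  also have "\<dots> = complex_of_real ((cmod z)\<^sup>2) * a" by (simp only: cnj_mult_self)
  finally show ?thesis by (simp only: re_ofreal_mult)
qed

lemma GL2_coeff:
  assumes "X w n \<le> Hnorm2 w"
  shows "Re (cnj (w n) * rhs_GL2 \<beta> \<omega> w n) \<le> (Re \<beta> - of_int (n\<^sup>2)) * X w n"
proof -
  define r where "r = 2 * Hnorm2 w - X w n"
  have r: "r \<ge> 0" using assms Hnorm2_nonneg[of w] unfolding r_def by simp
  have "rhs_GL2 \<beta> \<omega> w n = w n * (- of_int (n\<^sup>2) + \<beta> - (1 + \<i> * complex_of_real \<omega>) * complex_of_real r)"
    unfolding rhs_GL2_def Mop_def r_def by (simp add: algebra_simps)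
  hence "Re (cnj (w n) * rhs_GL2 \<beta> \<omega> w n) = X w n * Re (- of_int (n\<^sup>2) + \<beta> - (1 + \<i> * complex_of_real \<omega>) * complex_of_real r)"
    by (simp only: re_cnj_mult)
  also have "\<dots> = X w n * (- of_int (n\<^sup>2) + Re \<beta> - r)" by simp
  also have "\<dots> \<le> (Re \<beta> - of_int (n\<^sup>2)) * X w n" using r by (simp add: algebra_simps)
  finally show ?thesis .
qed

lemma GL1_coeff:
  assumes "n \<noteq> 0" "X w n + X w (-n) \<le> Hnorm2 w"
  shows "Re (cnj (w n) * rhs_GL1 \<gamma> \<beta> \<omega> w n) \<le> (Re \<beta> - of_int (n\<^sup>2)) * X w n
           + (1 + \<bar>\<omega>\<bar>) * (cmod (w n) * cmod (w (-n)) * cmod (bracket w w))"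
proof -
  define c where "c = 2 * Hnorm2 w - X w n - 2 * X w (-n)"
  have c: "c \<ge> 0" using assms(2) zero_le_power2[of "cmod (w n)"] unfolding c_def by linarith
  define z where "z = cnj (w n * w (-n)) * bracket w w"
  have "cnj (w n) * rhs_GL1 \<gamma> \<beta> \<omega> w n = cnj (w n) * (w n * (- (1 + \<i> * complex_of_real \<gamma>) * of_int (n\<^sup>2) + \<beta>
      - (1 + \<i> * complex_of_real \<omega>) * complex_of_real c)) - (1 + \<i> * complex_of_real \<omega>) * z"
    unfolding rhs_GL1_def Nop_def c_def z_def using assms(1) by (simp add: algebra_simps)
  hence "Re (cnj (w n) * rhs_GL1 \<gamma> \<beta> \<omega> w n) =
     X w n * Re (- (1 + \<i> * complex_of_real \<gamma>) * of_int (n\<^sup>2) + \<beta>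
      - (1 + \<i> * complex_of_real \<omega>) * complex_of_real c) - Re ((1 + \<i> * complex_of_real \<omega>) * z)"
    by (simp only: re_cnj_mult minus_complex.sel)
  also have "\<dots> = X w n * (- of_int (n\<^sup>2) + Re \<beta>) - X w n * c - Re ((1 + \<i> * complex_of_real \<omega>) * z)"
    by (simp add: algebra_simps)
  also have "\<dots> \<le> X w n * (- of_int (n\<^sup>2) + Re \<beta>) + (1 + \<bar>\<omega>\<bar>) * cmod z"
    using re_bound[of \<omega> z] c by (smt (verit) mult_nonneg_nonneg zero_le_power2 norm_ge_zero)
  also have "cmod z = cmod (w n) * cmod (w (-n)) * cmod (bracket w w)"
    unfolding z_def by (simp add: norm_mult)
  finally show ?thesis by (simp add: algebra_simps)
qed

lemma inH_refl_summable:
  assumes "inH w" shows "(\<lambda>n. X w (-n)) summable_on A"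
proof -
  have "X w summable_on (uminus ` A)" using assms unfolding inH_def
    by (rule summable_on_subset_banach) auto
  thus ?thesis by (subst (asm) summable_on_reindex) (auto simp: o_def)
qed

lemma infsum_refl:
  "infsum (\<lambda>n. X w (-n)) A = infsum (X w) (uminus ` A)"
  by (subst infsum_reindex) (auto simp: o_def)

lemma prod_le: "cmod (w n * w (-n)) \<le> (1/2) * (X w n + X w (-n))"
proof -
  have "2 * (cmod (w n) * cmod (w (-n))) \<le> (cmod (w n))\<^sup>2 + (cmod (w (-n)))\<^sup>2"
    using sum_squares_bound[of "cmod (w n)" "cmod (w (-n))"] by (simp add: mult.assoc)
  thus ?thesis by (simp add: norm_mult)
qed

lemma prod_le2: "cmod (w n * w (-n)) * 2 \<le> X w n + X w (-n)"
  using prod_le[of w n] by simp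

lemma bracket_summable:
  assumes "inH w" shows "(\<lambda>n. cmod (w n * w (-n))) summable_on A"
proof -
  have s: "(\<lambda>n. (1/2) * (X w n + X w (-n))) summable_on A"
  proof -
    have "X w summable_on A" using assms unfolding inH_def by (rule summable_on_subset_banach) auto
    hence "(\<lambda>n. X w n + X w (-n)) summable_on A" using inH_refl_summable[OF assms]
      by (intro summable_on_add)
    thus ?thesis by (rule summable_on_cmult_right)
  qed
  show ?thesis by (rule summable_on_comparison_test[OF s]) (auto simp: prod_le prod_le2)
qed

lemma bracket_set_bound:
  assumes "inH w"
  shows "cmod (infsum (\<lambda>n. w n * w (-n)) A) \<le> (1/2) * (infsum (X w) A + infsum (X w) (uminus ` A))"
proof -
  have s1: "X w summable_on A" using assms unfolding inH_def by (rule summable_on_subset_banach) auto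
  have s2: "(\<lambda>n. X w (-n)) summable_on A" by (rule inH_refl_summable[OF assms])
  have "cmod (infsum (\<lambda>n. w n * w (-n)) A) \<le> infsum (\<lambda>n. cmod (w n * w (-n))) A"
    by (rule norm_infsum_bound[OF bracket_summable[OF assms]])
  also have "\<dots> \<le> infsum (\<lambda>n. (1/2) * (X w n + X w (-n))) A"
    using bracket_summable[OF assms] s1 s2
    by (intro infsum_mono summable_on_cmult_right summable_on_add) (auto simp: prod_le prod_le2)
  also have "\<dots> = (1/2) * (infsum (X w) A + infsum (\<lambda>n. X w (-n)) A)"
    using s1 s2 by (subst infsum_cmult_right) (simp_all add: infsum_add summable_on_add)
  finally show ?thesis by (simp add: infsum_refl)
qed

lemma bracket_bound:
  assumes "inH w" shows "cmod (bracket w w) \<le> Hnorm2 w"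
  using bracket_set_bound[OF assms, of UNIV] unfolding bracket_def Hnorm2_def
  by simp



definition symm :: "int set \<Rightarrow> bool" where "symm F \<longleftrightarrow> (\<forall>n\<in>F. -n \<in> F)"

lemma symmD: "symm F \<Longrightarrow> n \<in> F \<Longrightarrow> -n \<in> F"
  unfolding symm_def by blast

lemma symm_iff: "symm F \<Longrightarrow> -n \<in> F \<longleftrightarrow> n \<in> F"
  using symmD[of F n] symmD[of F "-n"] by auto

lemma image_uminus_iff: "x \<in> uminus ` A \<longleftrightarrow> -x \<in> (A :: int set)"
proof
  assume "x \<in> uminus ` A" then obtain y where "y \<in> A" "x = -y" by blast
  thus "-x \<in> A" by simp
next
  assume "-x \<in> A" hence "-(-x) \<in> uminus ` A" by (rule imageI)
  thus "x \<in> uminus ` A" by simp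
qed

lemma symm_image: "symm F \<Longrightarrow> uminus ` F = F"
  by (rule set_eqI) (simp only: image_uminus_iff symm_iff)

lemma symm_compl_image: "symm F \<Longrightarrow> uminus ` (UNIV - F) = UNIV - F"
  by (rule set_eqI) (simp add: image_uminus_iff symm_iff)

lemma sum_reflect:
  assumes "symm G" shows "sum (\<lambda>n. f (-n)) G = sum f G"
proof -
  have "bij_betw uminus G G" unfolding bij_betw_def using symm_image[OF assms] by auto
  thus ?thesis by (rule sum.reindex_bij_betw)
qed

lemma tail_bound:
  assumes w: "inH w" and F: "finite F" "symm F"
  shows "cmod (bracket w w - (\<Sum>n\<in>F. w n * w (-n))) \<le> Hnorm2 w - sum (X w) F"
proof -
  let ?f = "\<lambda>n. w n * w (-n)"
  have sf: "?f summable_on UNIV" using bracket_summable[OF w] by (rule abs_summable_summable)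
  have e1: "infsum ?f (UNIV - F) = infsum ?f UNIV - infsum ?f F"
    by (rule infsum_Diff[OF sf]) (simp_all add: F(1))
  have e2: "infsum ?f F = (\<Sum>n\<in>F. ?f n)" using F(1) by (rule infsum_finite)
  have sX: "X w summable_on UNIV" using w unfolding inH_def .
  have e3: "infsum (X w) (UNIV - F) = infsum (X w) UNIV - infsum (X w) F"
    by (rule infsum_Diff[OF sX]) (simp_all add: F(1))
  have e4: "infsum (X w) F = sum (X w) F" using F(1) by (rule infsum_finite)
  have "cmod (infsum ?f (UNIV - F)) \<le> (1/2) * (infsum (X w) (UNIV - F) + infsum (X w) (uminus ` (UNIV - F)))"
    by (rule bracket_set_bound[OF w])
  also have "uminus ` (UNIV - F) = UNIV - F" by (rule symm_compl_image[OF F(2)])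
  finally have "cmod (infsum ?f (UNIV - F)) \<le> infsum (X w) (UNIV - F)" by simp
  thus ?thesis unfolding bracket_def Hnorm2_def e3 e4 by (simp only: e1 e2)
qed



lemma sumG:
  fixes x :: "int \<Rightarrow> real"
  assumes nn: "\<And>n. x n \<ge> 0" and G: "finite G" "symm G" "0 \<notin> G"
  shows "(\<Sum>n\<in>G. (x n)\<^sup>2 + 2 * x n * x (-n)) \<le> 3/2 * (sum x G)\<^sup>2"
proof -
  define P where "P = sum x G"
  have i: "x n + x (-n) \<le> P" if "n \<in> G" for n
  proof -
    have "n \<noteq> -n" using that G(3) by auto
    moreover have "{n, -n} \<subseteq> G" using that symmD[OF G(2) that] by simp
    ultimately have "sum x {n, -n} \<le> P" unfolding P_def using G(1) nn by (intro sum_mono2) auto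
    thus ?thesis using \<open>n \<noteq> -n\<close> by simp
  qed
  have ii: "(\<Sum>n\<in>G. x n * x (-n)) \<le> P * P - (\<Sum>n\<in>G. (x n)\<^sup>2)"
  proof -
    have "(\<Sum>n\<in>G. x n * x (-n)) \<le> (\<Sum>n\<in>G. x n * (P - x n))"
      using i nn by (intro sum_mono mult_left_mono) (auto simp: algebra_simps)
    also have "\<dots> = P * P - (\<Sum>n\<in>G. (x n)\<^sup>2)"
      by (simp add: algebra_simps sum_subtractf sum_distrib_left power2_eq_square P_def)
    finally show ?thesis .
  qed
  have iii: "(\<Sum>n\<in>G. x n * x (-n)) \<le> (\<Sum>n\<in>G. (x n)\<^sup>2)"
  proof -
    have "(\<Sum>n\<in>G. x n * x (-n)) \<le> (\<Sum>n\<in>G. (1/2) * ((x n)\<^sup>2 + (x (-n))\<^sup>2))"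
    proof (rule sum_mono)
      fix n show "x n * x (-n) \<le> (1/2) * ((x n)\<^sup>2 + (x (-n))\<^sup>2)"
        using sum_squares_bound[of "x n" "x (-n)"] by simp
    qed
    also have "\<dots> = (1/2) * ((\<Sum>n\<in>G. (x n)\<^sup>2) + (\<Sum>n\<in>G. (x (-n))\<^sup>2))"
      by (simp only: sum.distrib sum_distrib_left[symmetric])
    also have "(\<Sum>n\<in>G. (x (-n))\<^sup>2) = (\<Sum>n\<in>G. (x n)\<^sup>2)"
      using sum_reflect[OF G(2), of "\<lambda>n. (x n)\<^sup>2"] by simp
    finally show ?thesis by simp
  qed
  have "(\<Sum>n\<in>G. (x n)\<^sup>2 + 2 * x n * x (-n)) = (\<Sum>n\<in>G. (x n)\<^sup>2) + 2 * (\<Sum>n\<in>G. x n * x (-n))"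
    by (simp add: sum.distrib sum_distrib_left mult.assoc)
  also have "\<dots> \<le> 3/2 * (P * P)" using ii iii by linarith
  finally show ?thesis by (simp add: P_def power2_eq_square)
qed

definition N' :: "real \<Rightarrow> complex \<Rightarrow> fseq \<Rightarrow> int \<Rightarrow> complex" where
  "N' S b w n = (if n = 0 then w 0 * complex_of_real (2 * (S - X w 0)) + cnj (w 0) * b
     else w n * complex_of_real (2 * S - X w n - 2 * X w (-n)) + cnj (w (-n)) * b)"

lemma Nop_N': "Nop w n = N' (Hnorm2 w) (bracket w w) w n"
  unfolding Nop_def N'_def by (simp add: algebra_simps)

lemma cnj_expand: "cnj z * (z * complex_of_real c + cnj y * b) = complex_of_real ((cmod z)\<^sup>2 * c) + cnj (z * y) * b"
proof -
  have "cnj z * (z * complex_of_real c + cnj y * b) = (cnj z * z) * complex_of_real c + cnj z * cnj y * b"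
    by (simp only: distrib_left mult.assoc)
  also have "\<dots> = complex_of_real ((cmod z)\<^sup>2) * complex_of_real c + cnj (z * y) * b"
    by (simp only: cnj_mult_self complex_cnj_mult)
  finally show ?thesis by (simp only: of_real_mult)
qed



lemma big_alg:
  fixes w :: fseq and S :: real and b :: complex and F :: "int set"
  assumes fin: "finite F" and sy: "symm F" and z: "0 \<in> F" and SF: "sum (X w) F \<le> S"
  shows "(sum (X w) F)\<^sup>2 / 2 - (1 + \<bar>\<omega>\<bar>) * S * cmod (b - (\<Sum>n\<in>F. w n * w (-n)))
     \<le> Re ((1 + \<i> * complex_of_real \<omega>) * (\<Sum>n\<in>F. cnj (w n) * N' S b w n))"
proof -
  define G where "G = F - {0}"
  have FG: "F = insert 0 G" and G0: "0 \<notin> G" and Gfin: "finite G" using z fin unfolding G_def by auto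
  have Gs: "symm G" unfolding symm_def G_def using symmD[OF sy] by auto
  define x where "x = X w"
  have xnn: "\<And>n. x n \<ge> 0" unfolding x_def by simp
  define X0 where "X0 = x 0"
  define P where "P = sum x G"
  have X0nn: "X0 \<ge> 0" and Pnn: "P \<ge> 0" unfolding X0_def P_def using xnn by (auto intro: sum_nonneg)
  have sF: "sum (X w) F = X0 + P" unfolding FG X0_def P_def x_def using Gfin G0 by simp
  have S: "S \<ge> X0 + P" using SF sF by simp
  define bG where "bG = (\<Sum>n\<in>G. w n * w (-n))"
  define bF where "bF = (\<Sum>n\<in>F. w n * w (-n))"
  have bF: "bF = w 0 * w 0 + bG" unfolding bF_def bG_def FG using Gfin G0 by simp
  define R where "R = 2 * X0 * (S - X0) + (\<Sum>n\<in>G. x n * (2 * S - x n - 2 * x (-n)))"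
  have t0: "cnj (w 0) * N' S b w 0 = complex_of_real (2 * X0 * (S - X0)) + cnj (w 0 * w 0) * b"
  proof -
    have "cnj (w 0) * N' S b w 0 = cnj (w 0) * (w 0 * complex_of_real (2 * (S - X0)) + cnj (w 0) * b)"
      unfolding N'_def X0_def x_def by simp
    also have "\<dots> = complex_of_real ((cmod (w 0))\<^sup>2 * (2 * (S - X0))) + cnj (w 0 * w 0) * b"
      by (rule cnj_expand)
    finally show ?thesis unfolding X0_def x_def by (simp add: algebra_simps)
  qed
  have tn: "cnj (w n) * N' S b w n = complex_of_real (x n * (2 * S - x n - 2 * x (-n))) + cnj (w n * w (-n)) * b"
    if "n \<in> G" for n
  proof -
    have "n \<noteq> 0" using that G0 by auto
    hence "cnj (w n) * N' S b w n = cnj (w n) * (w n * complex_of_real (2 * S - x n - 2 * x (-n)) + cnj (w (-n)) * b)"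
      unfolding N'_def x_def by simp
    also have "\<dots> = complex_of_real (x n * (2 * S - x n - 2 * x (-n))) + cnj (w n * w (-n)) * b"
      unfolding x_def by (rule cnj_expand)
    finally show ?thesis .
  qed
  have sumeq: "(\<Sum>n\<in>F. cnj (w n) * N' S b w n) = complex_of_real R + cnj bF * b"
  proof -
    have "(\<Sum>n\<in>F. cnj (w n) * N' S b w n) = cnj (w 0) * N' S b w 0 + (\<Sum>n\<in>G. cnj (w n) * N' S b w n)"
      unfolding FG using Gfin G0 by simp
    also have "(\<Sum>n\<in>G. cnj (w n) * N' S b w n) =
        (\<Sum>n\<in>G. complex_of_real (x n * (2 * S - x n - 2 * x (-n))) + cnj (w n * w (-n)) * b)"
      using tn by (rule sum.cong[OF refl])
    also have "\<dots> = complex_of_real (\<Sum>n\<in>G. x n * (2 * S - x n - 2 * x (-n))) + cnj bG * b"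
      unfolding bG_def by (simp add: sum.distrib sum_distrib_right)
    finally show ?thesis unfolding t0 R_def bF by (simp add: algebra_simps)
  qed
  have Rb: "R \<ge> 4 * X0 * P + P\<^sup>2 / 2"
  proof -
    have "(\<Sum>n\<in>G. x n * (2 * S - x n - 2 * x (-n))) = (\<Sum>n\<in>G. 2 * S * x n - ((x n)\<^sup>2 + 2 * x n * x (-n)))"
      by (rule sum.cong) (simp_all add: algebra_simps power2_eq_square)
    also have "\<dots> = 2 * S * P - (\<Sum>n\<in>G. (x n)\<^sup>2 + 2 * x n * x (-n))"
      unfolding P_def by (simp add: sum_subtractf sum_distrib_left)
    finally have e: "(\<Sum>n\<in>G. x n * (2 * S - x n - 2 * x (-n))) = 2 * S * P - (\<Sum>n\<in>G. (x n)\<^sup>2 + 2 * x n * x (-n))" .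
    have q: "(\<Sum>n\<in>G. (x n)\<^sup>2 + 2 * x n * x (-n)) \<le> 3/2 * P\<^sup>2"
      unfolding P_def by (rule sumG[OF xnn Gfin Gs G0])
    have m1: "X0 * (S - X0) \<ge> X0 * P" using S X0nn by (intro mult_left_mono) auto
    have m2: "S * P \<ge> (X0 + P) * P" using S Pnn by (intro mult_right_mono) auto
    show ?thesis unfolding R_def e using q m1 m2 by (simp add: algebra_simps power2_eq_square)
  qed
  have bGb: "cmod bG \<le> P"
  proof -
    have "cmod bG \<le> (\<Sum>n\<in>G. cmod (w n * w (-n)))" unfolding bG_def by (rule norm_sum)
    also have "\<dots> \<le> (\<Sum>n\<in>G. (1/2) * (x n + x (-n)))" unfolding x_def by (intro sum_mono prod_le)
    also have "\<dots> = (1/2) * (sum x G + (\<Sum>n\<in>G. x (-n)))"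
      by (simp only: sum.distrib sum_distrib_left[symmetric])
    also have "\<dots> = (1/2) * (P + P)"
      unfolding P_def using sum_reflect[OF Gs, of x] by simp
    finally show ?thesis by simp
  qed
  have w00: "cmod (w 0 * w 0) = X0" unfolding X0_def x_def by (simp add: norm_mult power2_eq_square)
  have bFlo: "cmod bF \<ge> X0 - P"
    using norm_diff_ineq[of "w 0 * w 0" bG] bF bGb w00 by simp
  have bFhi: "cmod bF \<le> S"
    using norm_triangle_ineq[of "w 0 * w 0" bG] bF bGb w00 S by simp
  define K where "K = 1 + \<bar>\<omega>\<bar>"
  have Kp: "K \<ge> 0" unfolding K_def by simp
  have "cnj bF * b = cnj bF * bF + cnj bF * (b - bF)"
    by (simp add: algebra_simps)
  also have "cnj bF * bF = complex_of_real ((cmod bF)\<^sup>2)" by (rule cnj_mult_self)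
  finally have cb: "cnj bF * b = complex_of_real ((cmod bF)\<^sup>2) + cnj bF * (b - bF)" .
  define c where "c = cmod (b - bF)"
  define B where "B = cmod bF"
  define om where "om = 1 + \<i> * complex_of_real \<omega>"
  have "om * (complex_of_real R + cnj bF * b) = om * complex_of_real (R + B\<^sup>2) + om * (cnj bF * (b - bF))"
    unfolding cb B_def by (simp only: distrib_left of_real_add add.assoc)
  hence "Re (om * (\<Sum>n\<in>F. cnj (w n) * N' S b w n)) = Re (om * complex_of_real (R + B\<^sup>2)) + Re (om * (cnj bF * (b - bF)))"
    unfolding sumeq by (simp only: plus_complex.sel)
  also have "Re (om * complex_of_real (R + B\<^sup>2)) = R + B\<^sup>2" unfolding om_def by simp
  finally have eqR: "Re (om * (\<Sum>n\<in>F. cnj (w n) * N' S b w n)) = R + B\<^sup>2 + Re (om * (cnj bF * (b - bF)))" .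
  have r1: "Re (om * (cnj bF * (b - bF))) \<ge> - (K * (B * c))"
    using re_bound[of \<omega> "cnj bF * (b - bF)"] unfolding K_def om_def B_def c_def by (simp add: norm_mult)
  have r2: "K * (B * c) \<le> K * (S * c)"
    using bFhi Kp unfolding B_def c_def by (intro mult_left_mono mult_right_mono) auto
  have Bnn: "B \<ge> 0" unfolding B_def by simp
  have x1: "X0 * P \<ge> 0" "X0 * X0 \<ge> 0" "P * P \<ge> 0" using X0nn Pnn by auto
  have sq: "(X0 + P)\<^sup>2 = X0 * X0 + 2 * (X0 * P) + P * P" "P\<^sup>2 = P * P"
    by (simp_all add: power2_eq_square algebra_simps)
  have Rb': "R \<ge> 4 * (X0 * P) + P * P / 2" using Rb by (simp add: power2_eq_square)
  have r3: "R + B\<^sup>2 \<ge> (X0 + P)\<^sup>2 / 2"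
  proof (cases "X0 \<le> P")
    case True
    have "X0 * X0 \<le> X0 * P" using True X0nn by (intro mult_left_mono)
    moreover have "B\<^sup>2 \<ge> 0" by simp
    ultimately show ?thesis using Rb' x1 sq by linarith
  next
    case False
    hence "(X0 - P)\<^sup>2 \<le> B\<^sup>2" using bFlo unfolding B_def by (intro power_mono) auto
    moreover have "(X0 - P)\<^sup>2 = X0 * X0 - 2 * (X0 * P) + P * P" by (simp add: power2_eq_square algebra_simps)
    ultimately show ?thesis using Rb' x1 sq by linarith
  qed
  have "K * S * c = K * (S * c)" by simp
  thus ?thesis unfolding sF bF_def[symmetric] K_def[symmetric] om_def[symmetric] c_def[symmetric] eqR
    using r1 r2 r3 by linarith
qed



lemma GL1_term:
  "Re (cnj (w n) * rhs_GL1 \<gamma> \<beta> \<omega> w n) = X w n * (Re \<beta> - of_int (n\<^sup>2))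
     - Re ((1 + \<i> * complex_of_real \<omega>) * (cnj (w n) * Nop w n))"
proof -
  define A where "A = - (1 + \<i> * complex_of_real \<gamma>) * of_int (n\<^sup>2) + \<beta>"
  have "cnj (w n) * rhs_GL1 \<gamma> \<beta> \<omega> w n = cnj (w n) * (w n * A) - (1 + \<i> * complex_of_real \<omega>) * (cnj (w n) * Nop w n)"
    unfolding rhs_GL1_def A_def by (simp add: algebra_simps)
  hence "Re (cnj (w n) * rhs_GL1 \<gamma> \<beta> \<omega> w n) = X w n * Re A - Re ((1 + \<i> * complex_of_real \<omega>) * (cnj (w n) * Nop w n))"
    by (simp only: minus_complex.sel re_cnj_mult)
  moreover have "Re A = Re \<beta> - of_int (n\<^sup>2)" unfolding A_def by simp
  ultimately show ?thesis by simp
qed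

lemma GL1_sum:
  assumes w: "inH w" and fin: "finite F" and sy: "symm F" and z: "0 \<in> F"
  shows "(\<Sum>n\<in>F. Re (cnj (w n) * rhs_GL1 \<gamma> \<beta> \<omega> w n)) \<le>
     Re \<beta> * sum (X w) F - (sum (X w) F)\<^sup>2 / 2 + (1 + \<bar>\<omega>\<bar>) * Hnorm2 w * (Hnorm2 w - sum (X w) F)"
proof -
  define om where "om = 1 + \<i> * complex_of_real \<omega>"
  define S where "S = Hnorm2 w"
  define K where "K = 1 + \<bar>\<omega>\<bar>"
  have "(\<Sum>n\<in>F. Re (cnj (w n) * rhs_GL1 \<gamma> \<beta> \<omega> w n)) =
      (\<Sum>n\<in>F. X w n * (Re \<beta> - of_int (n\<^sup>2))) - (\<Sum>n\<in>F. Re (om * (cnj (w n) * Nop w n)))"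
    unfolding GL1_term om_def by (simp add: sum_subtractf)
  also have "(\<Sum>n\<in>F. Re (om * (cnj (w n) * Nop w n))) = Re (om * (\<Sum>n\<in>F. cnj (w n) * N' S (bracket w w) w n))"
    unfolding Nop_N' S_def by (simp add: sum_distrib_left)
  also have "(\<Sum>n\<in>F. X w n * (Re \<beta> - of_int (n\<^sup>2))) \<le> Re \<beta> * sum (X w) F"
  proof -
    have "(\<Sum>n\<in>F. X w n * (Re \<beta> - of_int (n\<^sup>2))) \<le> (\<Sum>n\<in>F. Re \<beta> * X w n)"
      by (intro sum_mono) (simp add: algebra_simps)
    thus ?thesis by (simp add: sum_distrib_left)
  qed
  finally have h1: "(\<Sum>n\<in>F. Re (cnj (w n) * rhs_GL1 \<gamma> \<beta> \<omega> w n)) \<le>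
     Re \<beta> * sum (X w) F - Re (om * (\<Sum>n\<in>F. cnj (w n) * N' S (bracket w w) w n))" by simp
  have h2: "(sum (X w) F)\<^sup>2 / 2 - K * S * cmod (bracket w w - (\<Sum>n\<in>F. w n * w (-n)))
     \<le> Re (om * (\<Sum>n\<in>F. cnj (w n) * N' S (bracket w w) w n))"
    unfolding om_def K_def by (rule big_alg[OF fin sy z]) (simp add: S_def sum_le_Hnorm2[OF w fin])
  have h3: "K * S * cmod (bracket w w - (\<Sum>n\<in>F. w n * w (-n))) \<le> K * S * (S - sum (X w) F)"
    unfolding S_def using tail_bound[OF w fin sy] Hnorm2_nonneg[of w]
    by (intro mult_left_mono) (auto simp: K_def)
  show ?thesis using h1 h2 h3 unfolding S_def[symmetric] K_def[symmetric] by linarith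
qed



lemma Hdist_sym: "Hdist w v = Hdist v w"
  unfolding Hdist_def Hnorm2_def by (simp add: norm_minus_commute)

lemma cont_sqrtS:
  assumes sol: "is_solution F u"
  shows "continuous_on {0..} (\<lambda>s. sqrt (Hnorm2 (u s)))"
  unfolding continuous_on_def
proof (intro ballI)
  fix t :: real assume t: "t \<in> {0..}"
  have lim: "((\<lambda>s. Hdist (u s) (u t)) \<longlongrightarrow> 0) (at t within {0..})"
    using sol t unfolding is_solution_def by auto
  have "norm (sqrt (Hnorm2 (u s)) - sqrt (Hnorm2 (u t))) \<le> Hdist (u s) (u t)" if "s \<in> {0..}" for s
  proof -
    have a: "inH (u s)" "inH (u t)" using that t sol_inH[OF sol] by auto
    show ?thesis using minkowski[OF a] minkowski[OF a(2) a(1)] Hdist_sym[of "u s" "u t"] by auto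
  qed
  hence ev: "eventually (\<lambda>s. norm (sqrt (Hnorm2 (u s)) - sqrt (Hnorm2 (u t))) \<le> Hdist (u s) (u t)) (at t within {0..})"
    unfolding eventually_at_filter by (intro always_eventually) auto
  show "((\<lambda>s. sqrt (Hnorm2 (u s))) \<longlongrightarrow> sqrt (Hnorm2 (u t))) (at t within {0..})"
    unfolding Lim_null[of _ "sqrt (Hnorm2 (u t))"] by (rule Lim_null_comparison[OF ev lim])
qed

lemma S_bounded:
  assumes sol: "is_solution F u"
  shows "\<exists>M\<ge>0. \<forall>s\<in>{0..t}. Hnorm2 (u s) \<le> M"
proof -
  have "continuous_on {0..t} (\<lambda>s. sqrt (Hnorm2 (u s)))"
    by (rule continuous_on_subset[OF cont_sqrtS[OF sol]]) auto
  hence "compact ((\<lambda>s. sqrt (Hnorm2 (u s))) ` {0..t})" by (intro compact_continuous_image) auto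
  hence "bounded ((\<lambda>s. sqrt (Hnorm2 (u s))) ` {0..t})" by (rule compact_imp_bounded)
  then obtain B where B0: "\<forall>x\<in>(\<lambda>s. sqrt (Hnorm2 (u s))) ` {0..t}. norm x \<le> B"
    unfolding bounded_iff by blast
  have B: "norm (sqrt (Hnorm2 (u s))) \<le> B" if "s \<in> {0..t}" for s
    using B0 that by blast
  have "Hnorm2 (u s) \<le> B\<^sup>2" if "s \<in> {0..t}" for s
  proof -
    have "sqrt (Hnorm2 (u s)) \<le> B" using B[OF that] by simp
    thus ?thesis using Hnorm2_nonneg by (simp add: sqrt_le_D)
  qed
  thus ?thesis by (intro exI[of _ "B\<^sup>2"]) auto
qed

lemma GL2_decay:
  assumes sol: "is_solution (rhs_GL2 \<beta> \<omega>) u" and t: "0 \<le> t0" "t0 \<le> t1"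
  shows "X (u t1) n \<le> exp (2 * (Re \<beta> - of_int (n\<^sup>2)) * (t1 - t0)) * X (u t0) n"
proof (rule growth[OF t(2)])
  show "continuous_on {t0..t1} (\<lambda>s. X (u s) n)"
    by (rule continuous_on_subset[OF cont_X[OF sol]]) (use t in auto)
  fix s assume s: "t0 < s" "s < t1"
  show "((\<lambda>s. X (u s) n) has_real_derivative 2 * Re (cnj (u s n) * rhs_GL2 \<beta> \<omega> (u s) n)) (at s)"
    using s t by (intro deriv_X[OF sol]) auto
  have "inH (u s)" using sol_inH[OF sol] s t by auto
  thus "2 * Re (cnj (u s n) * rhs_GL2 \<beta> \<omega> (u s) n) \<le> 2 * (Re \<beta> - of_int (n\<^sup>2)) * X (u s) n"
  proof -
    have h: "Re (cnj (u s n) * rhs_GL2 \<beta> \<omega> (u s) n) \<le> (Re \<beta> - of_int (n\<^sup>2)) * X (u s) n"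
      by (rule GL2_coeff) (rule coeff_le_Hnorm2[OF \<open>inH (u s)\<close>])
    have "2 * Re (cnj (u s n) * rhs_GL2 \<beta> \<omega> (u s) n) \<le> 2 * ((Re \<beta> - of_int (n\<^sup>2)) * X (u s) n)"
      by (rule mult_left_mono[OF h]) simp
    thus ?thesis by (simp only: mult.assoc)
  qed
qed

lemma GL1_pair:
  assumes sol: "is_solution (rhs_GL1 \<gamma> \<beta> \<omega>) u" and n: "n \<noteq> 0" and t: "0 \<le> t0" "t0 \<le> t1"
    and M: "\<And>s. s \<in> {t0..t1} \<Longrightarrow> Hnorm2 (u s) \<le> M"
  shows "X (u t1) n + X (u t1) (-n) \<le>
      exp (2 * (Re \<beta> - of_int (n\<^sup>2) + (1 + \<bar>\<omega>\<bar>) * M) * (t1 - t0)) * (X (u t0) n + X (u t0) (-n))"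
proof (rule growth[OF t(2)])
  show "continuous_on {t0..t1} (\<lambda>s. X (u s) n + X (u s) (-n))"
    by (rule continuous_on_subset[OF continuous_on_add[OF cont_X[OF sol] cont_X[OF sol]]]) (use t in auto)
  fix s assume s: "t0 < s" "s < t1"
  show "((\<lambda>s. X (u s) n + X (u s) (-n)) has_real_derivative
      2 * Re (cnj (u s n) * rhs_GL1 \<gamma> \<beta> \<omega> (u s) n) + 2 * Re (cnj (u s (-n)) * rhs_GL1 \<gamma> \<beta> \<omega> (u s) (-n))) (at s)"
    using s t by (intro DERIV_add deriv_X[OF sol]) auto
  define w where "w = u s"
  have w: "inH w" using sol_inH[OF sol] s t unfolding w_def by auto
  have Mw: "Hnorm2 w \<le> M" using M s unfolding w_def by auto
  define K where "K = 1 + \<bar>\<omega>\<bar>"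
  define p where "p = cmod (w n) * cmod (w (-n))"
  have c1: "Re (cnj (w n) * rhs_GL1 \<gamma> \<beta> \<omega> w n) \<le> (Re \<beta> - of_int (n\<^sup>2)) * X w n + K * (p * cmod (bracket w w))"
    using GL1_coeff[OF n pair_le_Hnorm2[OF w n], of \<gamma> \<beta> \<omega>] unfolding K_def p_def by simp
  have c2: "Re (cnj (w (-n)) * rhs_GL1 \<gamma> \<beta> \<omega> w (-n)) \<le> (Re \<beta> - of_int (n\<^sup>2)) * X w (-n) + K * (p * cmod (bracket w w))"
    using GL1_coeff[of "-n" w \<gamma> \<beta> \<omega>] pair_le_Hnorm2[OF w, of "-n"] n unfolding K_def p_def
    by (simp add: add.commute mult.commute)
  have pb: "2 * p \<le> X w n + X w (-n)" unfolding p_def using sum_squares_bound[of "cmod (w n)" "cmod (w (-n))"] by simp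
  have bb: "cmod (bracket w w) \<le> M" using bracket_bound[OF w] Mw by simp
  have pn: "p \<ge> 0" unfolding p_def by simp
  have "2 * p * cmod (bracket w w) \<le> (X w n + X w (-n)) * M"
    using pb bb pn by (intro mult_mono) auto
  hence "K * (2 * p * cmod (bracket w w)) \<le> K * ((X w n + X w (-n)) * M)"
    by (intro mult_left_mono) (auto simp: K_def)
  thus "2 * Re (cnj (u s n) * rhs_GL1 \<gamma> \<beta> \<omega> (u s) n) + 2 * Re (cnj (u s (-n)) * rhs_GL1 \<gamma> \<beta> \<omega> (u s) (-n))
      \<le> 2 * (Re \<beta> - of_int (n\<^sup>2) + (1 + \<bar>\<omega>\<bar>) * M) * (X (u s) n + X (u s) (-n))"
    using c1 c2 unfolding w_def[symmetric] K_def[symmetric] by (simp add: algebra_simps)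
qed

lemma decay_zero:
  fixes x R c :: real
  assumes x: "x \<ge> 0" and c: "c > 0" and h: "\<And>t. t \<ge> 0 \<Longrightarrow> x \<le> exp (- c * t) * R"
  shows "x = 0"
proof (rule ccontr)
  assume "x \<noteq> 0" hence xp: "x > 0" using x by simp
  have R: "R \<ge> x" using h[of 0] by simp
  define t where "t = (R / x) / c"
  have tn: "t \<ge> 0" unfolding t_def using R xp c by simp
  have "x \<le> exp (- c * t) * R" by (rule h[OF tn])
  also have "exp (- c * t) * R = R / exp (c * t)" by (simp add: exp_minus field_simps)
  also have "\<dots> \<le> R / (1 + c * t)"
    using R xp tn c exp_ge_add_one_self[of "c * t"]
    by (intro divide_left_mono) (auto intro!: mult_pos_pos add_pos_nonneg)
  also have "c * t = R / x" unfolding t_def using c by simp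
  also have "R / (1 + R / x) = R * x / (x + R)" using xp R by (simp add: field_simps)
  also have "\<dots> < x" using xp R by (simp add: field_simps)
  finally show False by simp
qed



abbreviation Fm :: "nat \<Rightarrow> int set" where "Fm m \<equiv> {- int m..int m}"

lemma Fm_props: "finite (Fm m)" "symm (Fm m)" "0 \<in> Fm m"
  by (auto simp: symm_def)

lemma Fm_mono: "inH w \<Longrightarrow> m \<le> m' \<Longrightarrow> sum (X w) (Fm m) \<le> sum (X w) (Fm m')"
  by (intro sum_mono2) auto

lemma tail_eq:
  assumes "inH w"
  shows "Hnorm2 w - sum (X w) (Fm m) = infsum (X w) (UNIV - Fm m)"
proof -
  have sX: "X w summable_on UNIV" using assms unfolding inH_def .
  have "infsum (X w) (UNIV - Fm m) = infsum (X w) UNIV - infsum (X w) (Fm m)"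
    by (rule infsum_Diff[OF sX]) simp_all
  thus ?thesis unfolding Hnorm2_def by simp
qed

lemma tail_nonneg: "inH w \<Longrightarrow> Hnorm2 w - sum (X w) (Fm m) \<ge> 0"
  using sum_le_Hnorm2[of w "Fm m"] by simp

lemma tail_small:
  assumes w: "inH w" and e: "\<epsilon> > 0"
  shows "\<exists>M. \<forall>m\<ge>M. Hnorm2 w - sum (X w) (Fm m) \<le> \<epsilon>"
proof -
  obtain G where G: "finite G" "dist (sum (X w) G) (infsum (X w) UNIV) \<le> \<epsilon>"
    using infsum_finite_approximation[of "X w" UNIV \<epsilon>] w e unfolding inH_def by auto
  define M where "M = (\<Sum>g\<in>G. nat \<bar>g\<bar>)"
  have "\<forall>m\<ge>M. Hnorm2 w - sum (X w) (Fm m) \<le> \<epsilon>"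
  proof (intro allI impI)
    fix m assume m: "m \<ge> M"
    have "G \<subseteq> Fm m"
    proof
      fix g assume g: "g \<in> G"
      have "nat \<bar>g\<bar> \<le> M" unfolding M_def using G(1) g by (intro member_le_sum) auto
      thus "g \<in> Fm m" using m by auto
    qed
    hence "sum (X w) G \<le> sum (X w) (Fm m)" by (intro sum_mono2) auto
    moreover have "Hnorm2 w - sum (X w) G \<le> \<epsilon>" using G(2) unfolding Hnorm2_def dist_real_def by simp
    ultimately show "Hnorm2 w - sum (X w) (Fm m) \<le> \<epsilon>" by simp
  qed
  thus ?thesis by blast
qed

lemma tail_minkowski:
  assumes "inH w" "inH v"
  shows "sqrt (Hnorm2 w - sum (X w) (Fm m)) \<le> sqrt (Hnorm2 v - sum (X v) (Fm m)) + Hdist w v"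
proof -
  have "sqrt (infsum (\<lambda>n. (cmod (w n - v n))\<^sup>2) (UNIV - Fm m)) \<le> Hdist w v"
  proof -
    have s: "(\<lambda>n. (cmod (w n - v n))\<^sup>2) summable_on UNIV" using inH_diff[OF assms] unfolding inH_def .
    have "infsum (\<lambda>n. (cmod (w n - v n))\<^sup>2) (UNIV - Fm m) \<le> infsum (\<lambda>n. (cmod (w n - v n))\<^sup>2) UNIV"
      by (intro infsum_mono2 summable_on_subset_banach[OF s]) auto
    thus ?thesis unfolding Hdist_def Hnorm2_def by simp
  qed
  thus ?thesis using minkowski_set[OF assms, of "UNIV - Fm m"] tail_eq[OF assms(1)] tail_eq[OF assms(2)]
    by simp
qed

lemma compact_bound:
  assumes A: "Hcompact A"
  shows "\<exists>R\<ge>0. \<forall>v\<in>A. Hnorm2 v \<le> R"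
proof (rule ccontr)
  assume c: "\<not> ?thesis"
  have "\<forall>k::nat. \<exists>v\<in>A. Hnorm2 v > real k"
  proof
    fix k show "\<exists>v\<in>A. Hnorm2 v > real k" using c by (meson linorder_not_le of_nat_0_le_iff)
  qed
  then obtain x where x: "\<And>k. x k \<in> A" "\<And>k. Hnorm2 (x k) > real k" by metis
  obtain r a where r: "strict_mono r" "a \<in> A" "(\<lambda>k. Hdist (x (r k)) a) \<longlonglongrightarrow> 0"
    using A x(1) unfolding Hcompact_def by blast
  have inA: "\<And>v. v \<in> A \<Longrightarrow> inH v" using A unfolding Hcompact_def by auto
  obtain N where N: "\<And>k. k \<ge> N \<Longrightarrow> Hdist (x (r k)) a < 1"
    using r(3) by (metis (no_types, lifting) LIMSEQ_D dist_real_def real_norm_def zero_less_one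
        diff_zero abs_of_nonneg Hdist_def real_sqrt_ge_zero Hnorm2_nonneg)
  define C where "C = (sqrt (Hnorm2 a) + 1)\<^sup>2"
  define k where "k = max N (nat \<lceil>C\<rceil>)"
  have "sqrt (Hnorm2 (x (r k))) \<le> sqrt (Hnorm2 a) + Hdist (x (r k)) a"
    by (rule minkowski[OF inA[OF x(1)] inA[OF r(2)]])
  also have "\<dots> \<le> sqrt (Hnorm2 a) + 1" using N[of k] unfolding k_def by simp
  finally have "Hnorm2 (x (r k)) \<le> C" unfolding C_def by (rule sqrt_le_D)
  moreover have "real (r k) \<ge> real k" using seq_suble[OF r(1), of k] by simp
  moreover have "real k \<ge> C" unfolding k_def by linarith
  ultimately show False using x(2)[of "r k"] by simp
qed

lemma compact_tail:
  assumes A: "Hcompact A" and d: "\<delta> > 0"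
  shows "\<exists>m. \<forall>v\<in>A. Hnorm2 v - sum (X v) (Fm m) \<le> \<delta>"
proof (rule ccontr)
  assume c: "\<not> ?thesis"
  have "\<forall>m. \<exists>v\<in>A. Hnorm2 v - sum (X v) (Fm m) > \<delta>" using c by (meson linorder_not_le)
  then obtain x where x: "\<And>m. x m \<in> A" "\<And>m. Hnorm2 (x m) - sum (X (x m)) (Fm m) > \<delta>" by metis
  obtain r a where r: "strict_mono r" "a \<in> A" "(\<lambda>k. Hdist (x (r k)) a) \<longlonglongrightarrow> 0"
    using A x(1) unfolding Hcompact_def by blast
  have inA: "\<And>v. v \<in> A \<Longrightarrow> inH v" using A unfolding Hcompact_def by auto
  define e where "e = sqrt \<delta> / 2"
  have e: "e > 0" unfolding e_def using d by simp
  obtain N where N: "\<And>k. k \<ge> N \<Longrightarrow> Hdist (x (r k)) a < e"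
    using LIMSEQ_D[OF r(3) e] by (metis Hdist_def Hnorm2_nonneg abs_of_nonneg diff_zero real_norm_def real_sqrt_ge_zero)
  obtain M where M: "\<And>m. m \<ge> M \<Longrightarrow> Hnorm2 a - sum (X a) (Fm m) \<le> e\<^sup>2"
    using tail_small[OF inA[OF r(2)], of "e\<^sup>2"] e by auto
  define k where "k = max N M"
  have rk: "r k \<ge> M" using seq_suble[OF r(1), of k] unfolding k_def by simp
  have "sqrt (Hnorm2 (x (r k)) - sum (X (x (r k))) (Fm (r k))) \<le>
        sqrt (Hnorm2 a - sum (X a) (Fm (r k))) + Hdist (x (r k)) a"
    by (rule tail_minkowski[OF inA[OF x(1)] inA[OF r(2)]])
  also have "sqrt (Hnorm2 a - sum (X a) (Fm (r k))) \<le> e"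
    using M[OF rk] e by (simp add: real_le_lsqrt)
  also have "Hdist (x (r k)) a < e" using N unfolding k_def by simp
  finally have "sqrt (Hnorm2 (x (r k)) - sum (X (x (r k))) (Fm (r k))) < sqrt \<delta>"
    unfolding e_def by simp
  hence "Hnorm2 (x (r k)) - sum (X (x (r k))) (Fm (r k)) < \<delta>" by simp
  thus False using x(2)[of "r k"] by simp
qed



lemma attr_compact: "is_global_attractor F A \<Longrightarrow> Hcompact A"
  unfolding is_global_attractor_def by (elim conjE)

lemma attr_parts2:
  assumes "is_global_attractor F A"
  shows "\<forall>t\<ge>0. A = {u t | u. is_solution F u \<and> u 0 \<in> A}"
  using assms unfolding is_global_attractor_def by (elim conjE)

lemma attr_inH:
  assumes "is_global_attractor F A" "w \<in> A" shows "inH w"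
proof -
  have "A \<subseteq> {w. inH w}" using attr_compact[OF assms(1)] unfolding Hcompact_def by (elim conjE)
  thus ?thesis using assms(2) by (simp add: subset_iff)
qed

lemma attr_eq:
  assumes "is_global_attractor F A" "t \<ge> 0"
  shows "A = {u t | u. is_solution F u \<and> u 0 \<in> A}"
  using attr_parts2[OF assms(1)] assms(2) by (elim allE impE)

lemma attr_back:
  assumes "is_global_attractor F A" "w \<in> A" "t \<ge> 0"
  shows "\<exists>u. is_solution F u \<and> u 0 \<in> A \<and> u t = w"
proof -
  have "w \<in> {u t | u. is_solution F u \<and> u 0 \<in> A}" using assms(2) attr_eq[OF assms(1,3)] by simp
  thus ?thesis by blast
qed

lemma attr_fwd:
  assumes "is_global_attractor F A" "is_solution F u" "u 0 \<in> A" "s \<ge> 0"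
  shows "u s \<in> A"
proof -
  have "u s \<in> {u s | u. is_solution F u \<and> u 0 \<in> A}" using assms(2,3) by blast
  thus ?thesis using attr_eq[OF assms(1,4)] by simp
qed

lemma GL1_Sbound:
  assumes attr: "is_global_attractor (rhs_GL1 \<gamma> \<beta> \<omega>) A" and R: "R \<ge> 0" "\<And>v. v \<in> A \<Longrightarrow> Hnorm2 v \<le> R"
    and sol: "is_solution (rhs_GL1 \<gamma> \<beta> \<omega>) u" and u0: "u 0 \<in> A" and s: "s \<ge> R"
  shows "Hnorm2 (u s) \<le> 2 * \<bar>Re \<beta>\<bar> + 2"
proof -
  define a where "a = Re \<beta>"
  define K where "K = 1 + \<bar>\<omega>\<bar>"
  define L where "L = 2 * \<bar>a\<bar> + 2"
  define \<delta> where "\<delta> = 1 / (2 * K * (R + 1))"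
  have Kp: "K \<ge> 1" unfolding K_def by simp
  have dp: "\<delta> > 0" unfolding \<delta>_def using Kp R by simp
  obtain m where m: "\<And>v. v \<in> A \<Longrightarrow> Hnorm2 v - sum (X v) (Fm m) \<le> \<delta>"
    using compact_tail[OF attr_compact[OF attr] dp] by blast
  have uA: "\<And>\<tau>. \<tau> \<ge> 0 \<Longrightarrow> u \<tau> \<in> A" using attr_fwd[OF attr sol u0] by blast
  have key: "sum (X (u s)) (Fm m') \<le> L" if m': "m' \<ge> m" for m'
  proof -
    define f where "f \<tau> = sum (X (u \<tau>)) (Fm m')" for \<tau>
    define f' where "f' \<tau> = (\<Sum>n\<in>Fm m'. 2 * Re (cnj (u \<tau> n) * rhs_GL1 \<gamma> \<beta> \<omega> (u \<tau>) n))" for \<tau>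
    have "f s \<le> max L (f 0 - s)"
    proof (rule barrier[where f' = f'])
      show "continuous_on {0..} f" unfolding f_def
        by (intro continuous_on_sum cont_X[OF sol])
      fix \<tau> :: real assume tp: "0 < \<tau>"
      show "(f has_real_derivative f' \<tau>) (at \<tau>)" unfolding f_def f'_def
        by (intro DERIV_sum deriv_X[OF sol tp])
      assume fL: "f \<tau> \<ge> L"
      define w where "w = u \<tau>"
      have wA: "w \<in> A" unfolding w_def using uA tp by simp
      have w: "inH w" using attr_inH[OF attr wA] .
      define S where "S = Hnorm2 w"
      define fw where "fw = sum (X w) (Fm m')"
      have ffw: "f \<tau> = fw" unfolding f_def fw_def w_def ..
      have SR: "S \<le> R" unfolding S_def using R(2)[OF wA] .
      have Sn: "S \<ge> 0" unfolding S_def by (rule Hnorm2_nonneg)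
      have tl: "S - fw \<le> \<delta>" using m[OF wA] Fm_mono[OF w m'] unfolding S_def fw_def by simp
      have tl0: "S - fw \<ge> 0" using tail_nonneg[OF w] unfolding S_def fw_def .
      have "K * S * (S - fw) \<le> K * R * \<delta>" using SR tl tl0 Sn Kp
        by (intro mult_mono) auto
      also have "K * R * \<delta> = R / (2 * (R + 1))"
      proof -
        have K0: "K \<noteq> 0" using Kp by auto
        have "K * R * \<delta> = (K * R) / (K * (2 * (R + 1)))" unfolding \<delta>_def by (simp add: mult.assoc)
        also have "\<dots> = R / (2 * (R + 1))" using K0 by (rule mult_divide_mult_cancel_left)
        finally show ?thesis .
      qed
      also have "\<dots> \<le> 1 / 2" using R by (simp add: field_simps)
      finally have err: "K * S * (S - fw) \<le> 1 / 2" .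
      have gs: "(\<Sum>n\<in>Fm m'. Re (cnj (w n) * rhs_GL1 \<gamma> \<beta> \<omega> w n)) \<le> a * fw - fw\<^sup>2 / 2 + K * S * (S - fw)"
        unfolding a_def K_def S_def fw_def using GL1_sum[OF w Fm_props] .
      have f'eq: "f' \<tau> = 2 * (\<Sum>n\<in>Fm m'. Re (cnj (w n) * rhs_GL1 \<gamma> \<beta> \<omega> w n))"
        unfolding f'_def w_def by (simp add: sum_distrib_left)
      have fwL: "fw \<ge> L" using fL ffw by simp
      have L2: "L \<ge> 2" unfolding L_def by simp
      have q1: "fw * fw \<ge> L * fw" using fwL L2 by (intro mult_right_mono) auto
      have q2: "a * fw \<le> \<bar>a\<bar> * fw" using fwL L2 by (intro mult_right_mono) auto
      have sq: "fw\<^sup>2 = fw * fw" by (simp add: power2_eq_square)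
      have Lf: "L * fw = 2 * (\<bar>a\<bar> * fw) + 2 * fw" unfolding L_def by (simp add: algebra_simps)
      show "f' \<tau> \<le> -1" using f'eq gs err sq q1 q2 Lf fwL L2 by linarith
    qed (use s R(1) in simp)
    moreover have "f 0 \<le> R"
      unfolding f_def using sum_le_Hnorm2[OF sol_inH[OF sol, of 0], of "Fm m'"] R(2)[OF u0] by simp
    moreover have "L \<ge> 0" unfolding L_def by simp
    ultimately have "f s \<le> L" using s by linarith
    thus ?thesis unfolding f_def .
  qed
  have "Hnorm2 (u s) \<le> L"
  proof (rule Hnorm2_le_finite[OF sol_inH[OF sol]])
    show "0 \<le> s" using s R by simp
    fix G :: "int set" assume G: "finite G"
    define m' where "m' = max m (\<Sum>g\<in>G. nat \<bar>g\<bar>)"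
    have "G \<subseteq> Fm m'"
    proof
      fix g assume g: "g \<in> G"
      have "nat \<bar>g\<bar> \<le> (\<Sum>g\<in>G. nat \<bar>g\<bar>)" using G g by (intro member_le_sum) auto
      thus "g \<in> Fm m'" unfolding m'_def by auto
    qed
    hence "sum (X (u s)) G \<le> sum (X (u s)) (Fm m')" by (intro sum_mono2) auto
    also have "\<dots> \<le> L" by (rule key) (simp add: m'_def)
    finally show "sum (X (u s)) G \<le> L" .
  qed
  thus ?thesis unfolding L_def a_def .
qed



lemma GL1_zero:
  assumes attr: "is_global_attractor (rhs_GL1 \<gamma> \<beta> \<omega>) A" and wA: "w \<in> A"
    and n: "of_int \<bar>n\<bar> \<ge> \<bar>Re \<beta>\<bar> + (1 + \<bar>\<omega>\<bar>) * (2 * \<bar>Re \<beta>\<bar> + 2) + 1"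
  shows "w n = 0"
proof -
  obtain R where R: "R \<ge> 0" "\<And>v. v \<in> A \<Longrightarrow> Hnorm2 v \<le> R"
    using compact_bound[OF attr_compact[OF attr]] by blast
  define a where "a = Re \<beta>"
  define K where "K = 1 + \<bar>\<omega>\<bar>"
  define L where "L = 2 * \<bar>a\<bar> + 2"
  have Kn: "K \<ge> 0" "L \<ge> 0" unfolding K_def L_def by auto
  have KL: "K * L \<ge> 0" using Kn by simp
  have n1: "of_int \<bar>n\<bar> \<ge> (1::real)" using n KL unfolding K_def L_def a_def by linarith
  hence n0: "n \<noteq> 0" by auto
  have nn: "real_of_int (n\<^sup>2) \<ge> of_int \<bar>n\<bar>"
  proof -
    have "of_int \<bar>n\<bar> * 1 \<le> of_int \<bar>n\<bar> * (of_int \<bar>n\<bar> :: real)" using n1 by (intro mult_left_mono) auto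
    thus ?thesis by (simp add: power2_eq_square abs_mult_self_eq)
  qed
  have coef: "a - of_int (n\<^sup>2) + K * L \<le> -1" using n nn unfolding a_def K_def L_def by linarith
  have "\<forall>\<tau>\<ge>0. X w n \<le> exp (- 2 * \<tau>) * R"
  proof (intro allI impI)
    fix \<tau> :: real assume tau: "\<tau> \<ge> 0"
    define t where "t = R + \<tau>"
    obtain u where u: "is_solution (rhs_GL1 \<gamma> \<beta> \<omega>) u" "u 0 \<in> A" "u t = w"
      using attr_back[OF attr wA, of t] unfolding t_def using R tau by auto
    have M: "Hnorm2 (u s) \<le> L" if "s \<in> {R..t}" for s
      unfolding L_def a_def using GL1_Sbound[OF attr R u(1,2)] that by auto
    have "X (u t) n + X (u t) (-n) \<le> exp (2 * (a - of_int (n\<^sup>2) + K * L) * (t - R)) * (X (u R) n + X (u R) (-n))"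
      unfolding a_def K_def using GL1_pair[OF u(1) n0 R(1), of t L] M unfolding t_def using tau by auto
    also have "exp (2 * (a - of_int (n\<^sup>2) + K * L) * (t - R)) \<le> exp (- 2 * \<tau>)"
    proof -
      have "2 * (a - of_int (n\<^sup>2) + K * L) * \<tau> \<le> 2 * (-1) * \<tau>"
        using coef tau by (intro mult_right_mono) auto
      thus ?thesis unfolding t_def by simp
    qed
    hence "exp (2 * (a - of_int (n\<^sup>2) + K * L) * (t - R)) * (X (u R) n + X (u R) (-n))
        \<le> exp (- 2 * \<tau>) * (X (u R) n + X (u R) (-n))" by (intro mult_right_mono) auto
    also have "X (u R) n + X (u R) (-n) \<le> R"
      using pair_le_Hnorm2[OF attr_inH[OF attr attr_fwd[OF attr u(1,2) R(1)]] n0] R(2)[OF attr_fwd[OF attr u(1,2) R(1)]]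
      by simp
    hence "exp (- 2 * \<tau>) * (X (u R) n + X (u R) (-n)) \<le> exp (- 2 * \<tau>) * R" by (intro mult_left_mono) auto
    finally have "X (u t) n + X (u t) (-n) \<le> exp (- 2 * \<tau>) * R" .
    thus "X w n \<le> exp (- 2 * \<tau>) * R" using u(3) by (smt (verit) zero_le_power2)
  qed
  hence "X w n = 0" by (intro decay_zero[of _ 2 R]) auto
  thus ?thesis by simp
qed

lemma GL2_zero:
  assumes attr: "is_global_attractor (rhs_GL2 \<beta> \<omega>) A" and wA: "w \<in> A"
    and n: "of_int (n\<^sup>2) > Re \<beta>"
  shows "w n = 0"
proof -
  obtain R where R: "R \<ge> 0" "\<And>v. v \<in> A \<Longrightarrow> Hnorm2 v \<le> R"
    using compact_bound[OF attr_compact[OF attr]] by blast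
  define c where "c = 2 * (of_int (n\<^sup>2) - Re \<beta>)"
  have c: "c > 0" unfolding c_def using n by simp
  have "\<forall>\<tau>\<ge>0. X w n \<le> exp (- c * \<tau>) * R"
  proof (intro allI impI)
    fix \<tau> :: real assume tau: "\<tau> \<ge> 0"
    obtain u where u: "is_solution (rhs_GL2 \<beta> \<omega>) u" "u 0 \<in> A" "u \<tau> = w"
      using attr_back[OF attr wA tau] by auto
    have "X (u \<tau>) n \<le> exp (2 * (Re \<beta> - of_int (n\<^sup>2)) * (\<tau> - 0)) * X (u 0) n"
      using GL2_decay[OF u(1), of 0 \<tau> n] tau by simp
    also have "2 * (Re \<beta> - of_int (n\<^sup>2)) * (\<tau> - 0) = - c * \<tau>" unfolding c_def by (simp add: algebra_simps)
    also have "exp (- c * \<tau>) * X (u 0) n \<le> exp (- c * \<tau>) * R"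
      using coeff_le_Hnorm2[OF attr_inH[OF attr u(2)], of n] R(2)[OF u(2)] by (intro mult_left_mono) auto
    finally show "X w n \<le> exp (- c * \<tau>) * R" using u(3) by simp
  qed
  hence "X w n = 0" by (intro decay_zero[OF _ c]) auto
  thus ?thesis by simp
qed

lemma zero_sol_GL2: "is_solution (rhs_GL2 \<beta> \<omega>) (\<lambda>t n. 0)"
proof -
  have r: "rhs_GL2 \<beta> \<omega> (\<lambda>n. 0) n = 0" for n unfolding rhs_GL2_def Mop_def by simp
  have d: "Hdist (\<lambda>n. 0) (\<lambda>n. 0) = 0" unfolding Hdist_def Hnorm2_def by simp
  show ?thesis unfolding is_solution_def using inH_zero by (auto simp: r d)
qed

lemma H_D_mono: "D \<le> D' \<Longrightarrow> H_D D \<subseteq> H_D D'"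
  unfolding H_D_def by auto

lemma GL2_attr:
  assumes attr: "is_global_attractor (rhs_GL2 \<beta> \<omega>) A"
  shows "A \<subseteq> H_D (nat \<lfloor>sqrt (Re \<beta>)\<rfloor> + 1) \<and> (Re \<beta> < 0 \<longrightarrow> A = {\<lambda>n. 0})"
proof (intro conjI impI)
  show "A \<subseteq> H_D (nat \<lfloor>sqrt (Re \<beta>)\<rfloor> + 1)"
  proof
    fix w assume wA: "w \<in> A"
    have "w n = 0" if n: "\<bar>n\<bar> > int (nat \<lfloor>sqrt (Re \<beta>)\<rfloor> + 1)" for n
    proof (rule GL2_zero[OF attr wA])
      show "of_int (n\<^sup>2) > Re \<beta>"
      proof (cases "Re \<beta> < 0")
        case True thus ?thesis by (smt (verit) of_int_0_le_iff zero_le_power2)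
      next
        case False
        hence f: "\<lfloor>sqrt (Re \<beta>)\<rfloor> \<ge> 0" by simp
        hence "\<bar>n\<bar> \<ge> \<lfloor>sqrt (Re \<beta>)\<rfloor> + 2" using n by linarith
        hence "sqrt (Re \<beta>) < of_int \<bar>n\<bar>" by linarith
        hence "(sqrt (Re \<beta>))\<^sup>2 < (of_int \<bar>n\<bar>)\<^sup>2" using False by (intro power_strict_mono) auto
        thus ?thesis using False by simp
      qed
    qed
    thus "w \<in> H_D (nat \<lfloor>sqrt (Re \<beta>)\<rfloor> + 1)" unfolding H_D_def using attr_inH[OF attr wA] by auto
  qed
next
  assume neg: "Re \<beta> < 0"
  have sub: "A \<subseteq> {\<lambda>n. 0}"
  proof
    fix w assume wA: "w \<in> A"
    have "w n = 0" for n
      by (rule GL2_zero[OF attr wA]) (use neg in \<open>smt (verit) of_int_0_le_iff zero_le_power2\<close>)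
    thus "w \<in> {\<lambda>n. 0}" by auto
  qed
  have "Hbounded {\<lambda>n. 0}" unfolding Hbounded_def using inH_zero Hnorm2_zero by auto
  hence "\<exists>T. \<forall>t\<ge>T. \<forall>u. is_solution (rhs_GL2 \<beta> \<omega>) u \<and> u 0 \<in> {\<lambda>n. 0} \<longrightarrow> (\<exists>a\<in>A. Hdist (u t) a < 1)"
    using attr unfolding is_global_attractor_def by (elim conjE) (meson zero_less_one)
  then obtain T where T: "\<forall>t\<ge>T. \<forall>u. is_solution (rhs_GL2 \<beta> \<omega>) u \<and> u 0 \<in> {\<lambda>n. 0} \<longrightarrow> (\<exists>a\<in>A. Hdist (u t) a < 1)"
    by blast
  have "\<exists>a\<in>A. Hdist ((\<lambda>t n. 0) T) a < 1" using T zero_sol_GL2 by blast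
  hence "A \<noteq> {}" by blast
  thus "A = {\<lambda>n. 0}" using sub by blast
qed



lemma part1: "\<forall>(\<gamma>::real) (\<beta>::complex) (\<omega>::real) D u.
        is_solution (rhs_GL1 \<gamma> \<beta> \<omega>) u \<and> u 0 \<in> H_D D \<longrightarrow> (\<forall>t\<ge>0. u t \<in> H_D D)"
proof (intro allI impI)
  fix \<gamma> \<omega> :: real and \<beta> :: complex and D u and t :: real
  assume h: "is_solution (rhs_GL1 \<gamma> \<beta> \<omega>) u \<and> u 0 \<in> H_D D" and t: "t \<ge> 0"
  have sol: "is_solution (rhs_GL1 \<gamma> \<beta> \<omega>) u" and u0: "u 0 \<in> H_D D" using h by auto
  have z: "u t n = 0" if n: "\<bar>n\<bar> > int D" for n
  proof -
    have n0: "n \<noteq> 0" using n by auto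
    obtain M where M: "M \<ge> 0" "\<forall>s\<in>{0..t}. Hnorm2 (u s) \<le> M" using S_bounded[OF sol, of t] by blast
    have "X (u t) n + X (u t) (-n) \<le> exp (2 * (Re \<beta> - of_int (n\<^sup>2) + (1 + \<bar>\<omega>\<bar>) * M) * (t - 0)) * (X (u 0) n + X (u 0) (-n))"
      using GL1_pair[OF sol n0 order_refl t, of M] M by auto
    moreover have "u 0 n = 0" "u 0 (-n) = 0" using u0 n unfolding H_D_def by auto
    ultimately have "X (u t) n + X (u t) (-n) \<le> 0" by simp
    hence "X (u t) n \<le> 0" by (smt (verit) zero_le_power2)
    thus ?thesis by simp
  qed
  show "u t \<in> H_D D" unfolding H_D_def using sol_inH[OF sol t] z by auto
qed

lemma part2: "\<forall>(\<beta>::complex) (\<omega>::real) D u.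
        is_solution (rhs_GL2 \<beta> \<omega>) u \<and> u 0 \<in> H_D D \<longrightarrow> (\<forall>t\<ge>0. u t \<in> H_D D)"
proof (intro allI impI)
  fix \<omega> :: real and \<beta> :: complex and D u and t :: real
  assume h: "is_solution (rhs_GL2 \<beta> \<omega>) u \<and> u 0 \<in> H_D D" and t: "t \<ge> 0"
  have sol: "is_solution (rhs_GL2 \<beta> \<omega>) u" and u0: "u 0 \<in> H_D D" using h by auto
  have z: "u t n = 0" if n: "\<bar>n\<bar> > int D" for n
  proof -
    have "X (u t) n \<le> exp (2 * (Re \<beta> - of_int (n\<^sup>2)) * (t - 0)) * X (u 0) n"
      using GL2_decay[OF sol order_refl t] by blast
    moreover have "u 0 n = 0" using u0 n unfolding H_D_def by auto
    ultimately have "X (u t) n \<le> 0" by simp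
    thus ?thesis by simp
  qed
  show "u t \<in> H_D D" unfolding H_D_def using sol_inH[OF sol t] z by auto
qed

lemma part3: "\<forall>(\<beta>::complex) (\<omega>::real). \<exists>D0::nat. \<forall>D\<ge>D0.
        (\<forall>(\<gamma>::real) A. is_global_attractor (rhs_GL1 \<gamma> \<beta> \<omega>) A \<longrightarrow> A \<subseteq> H_D D)
        \<and> (\<forall>A. is_global_attractor (rhs_GL2 \<beta> \<omega>) A \<longrightarrow> A \<subseteq> H_D D)"
proof (intro allI)
  fix \<beta> :: complex and \<omega> :: real
  define c where "c = \<bar>Re \<beta>\<bar> + (1 + \<bar>\<omega>\<bar>) * (2 * \<bar>Re \<beta>\<bar> + 2) + 1"
  define D0 where "D0 = max (nat \<lceil>c\<rceil>) (nat \<lfloor>sqrt (Re \<beta>)\<rfloor> + 1)"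
  have "\<forall>D\<ge>D0. (\<forall>(\<gamma>::real) A. is_global_attractor (rhs_GL1 \<gamma> \<beta> \<omega>) A \<longrightarrow> A \<subseteq> H_D D)
        \<and> (\<forall>A. is_global_attractor (rhs_GL2 \<beta> \<omega>) A \<longrightarrow> A \<subseteq> H_D D)"
  proof (intro allI impI conjI)
    fix D assume D: "D0 \<le> D"
    fix \<gamma> :: real and A assume attr: "is_global_attractor (rhs_GL1 \<gamma> \<beta> \<omega>) A"
    show "A \<subseteq> H_D D"
    proof
      fix w assume wA: "w \<in> A"
      have "w n = 0" if n: "\<bar>n\<bar> > int D" for n
      proof (rule GL1_zero[OF attr wA])
        have "int D \<ge> \<lceil>c\<rceil>" using D unfolding D0_def by linarith
        hence "\<bar>n\<bar> \<ge> \<lceil>c\<rceil>" using n by linarith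
        hence "of_int \<bar>n\<bar> \<ge> c" by linarith
        thus "of_int \<bar>n\<bar> \<ge> \<bar>Re \<beta>\<bar> + (1 + \<bar>\<omega>\<bar>) * (2 * \<bar>Re \<beta>\<bar> + 2) + 1" unfolding c_def .
      qed
      thus "w \<in> H_D D" unfolding H_D_def using attr_inH[OF attr wA] by auto
    qed
  next
    fix D assume D: "D0 \<le> D"
    fix A assume attr: "is_global_attractor (rhs_GL2 \<beta> \<omega>) A"
    have "A \<subseteq> H_D (nat \<lfloor>sqrt (Re \<beta>)\<rfloor> + 1)" using GL2_attr[OF attr] by blast
    also have "\<dots> \<subseteq> H_D D" using D unfolding D0_def by (intro H_D_mono) auto
    finally show "A \<subseteq> H_D D" .
  qed
  thus "\<exists>D0::nat. \<forall>D\<ge>D0. (\<forall>(\<gamma>::real) A. is_global_attractor (rhs_GL1 \<gamma> \<beta> \<omega>) A \<longrightarrow> A \<subseteq> H_D D)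
        \<and> (\<forall>A. is_global_attractor (rhs_GL2 \<beta> \<omega>) A \<longrightarrow> A \<subseteq> H_D D)" by blast
qed

lemma part4: "\<forall>(\<beta>::complex) (\<omega>::real) A. is_global_attractor (rhs_GL2 \<beta> \<omega>) A \<longrightarrow>
        A \<subseteq> H_D (nat \<lfloor>sqrt (Re \<beta>)\<rfloor> + 1)
        \<and> (Re \<beta> < 0 \<longrightarrow> A = {\<lambda>n. 0})"
  using GL2_attr by blast

theorem proposition4p3:
  shows
   "(\<forall>(\<gamma>::real) (\<beta>::complex) (\<omega>::real) D u.
        is_solution (rhs_GL1 \<gamma> \<beta> \<omega>) u \<and> u 0 \<in> H_D D \<longrightarrow> (\<forall>t\<ge>0. u t \<in> H_D D))
    \<and> (\<forall>(\<beta>::complex) (\<omega>::real) D u.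
        is_solution (rhs_GL2 \<beta> \<omega>) u \<and> u 0 \<in> H_D D \<longrightarrow> (\<forall>t\<ge>0. u t \<in> H_D D))
    \<and> (\<forall>(\<beta>::complex) (\<omega>::real). \<exists>D0::nat. \<forall>D\<ge>D0.
        (\<forall>(\<gamma>::real) A. is_global_attractor (rhs_GL1 \<gamma> \<beta> \<omega>) A \<longrightarrow> A \<subseteq> H_D D)
        \<and> (\<forall>A. is_global_attractor (rhs_GL2 \<beta> \<omega>) A \<longrightarrow> A \<subseteq> H_D D))
    \<and> (\<forall>(\<beta>::complex) (\<omega>::real) A. is_global_attractor (rhs_GL2 \<beta> \<omega>) A \<longrightarrow>
        A \<subseteq> H_D (nat \<lfloor>sqrt (Re \<beta>)\<rfloor> + 1)
        \<and> (Re \<beta> < 0 \<longrightarrow> A = {\<lambda>n. 0}))"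
  by (rule conjI[OF part1 conjI[OF part2 conjI[OF part3 part4]]])


end
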